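(* Let $\{X_\alpha:\alpha\in\mathscr A\}$ be a family of Banach spaces and $\kappa$ an infinite cardinal. If for every $r\in(0,1)$ there are infinitely many $\alpha\in\mathscr A$ such that $X_\alpha$ is $(r,r)$-$\mathrm{SQ}_{<\kappa}$, then $\ell_\infty(\mathscr A,X_\alpha)$ is $(<1,1)$-$\mathrm{SQ}_{<\kappa}$.
   Context: $\ell_\infty(\mathscr A,X_\alpha)$ is the Banach space of functions $x$ on $\mathscr A$ with $x(\alpha)\in X_\alpha$ and $\|x\|_\infty=\sup_\alpha\|x(\alpha)\|<\infty$. For $r,s\in(0,1]$, a Banach space $Z$ is $(r,s)$-$\mathrm{SQ}_{<\kappa}$ if for every set $A\subset S_Z$ with $|A|<\kappa$ there exists $y\in S_Z$ with $\|rx\pm sy\|\le 1$ for all $x\in A$. $Z$ is $(<1,1)$-$\mathrm{SQ}_{<\kappa}$ if it is $(t,1)$-$\mathrm{SQ}_{<\kappa}$ for every $t\in(0,1)$. *)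

theory Defs
  imports "HOL-Analysis.Analysis"
begin

text \<open>Generic (r,s)-SQ_{<kappa} property for a normed space given by a carrier Z,
a norm function nrm and a linear-combination operation lc, where
lc a x b y stands for a x + b y.  The cardinal kappa is a cardinal order k
(in the sense of Main's BNF cardinal library), and |A| < kappa is
card_of A strictly below k.\<close>

definition SQ_gen ::
  "real \<Rightarrow> real \<Rightarrow> 'c rel \<Rightarrow> 'v set \<Rightarrow> ('v \<Rightarrow> real)
     \<Rightarrow> (real \<Rightarrow> 'v \<Rightarrow> real \<Rightarrow> 'v \<Rightarrow> 'v) \<Rightarrow> bool" where
  "SQ_gen r s k Z nrm lc \<longleftrightarrow>
     (\<forall>A. A \<subseteq> {z \<in> Z. nrm z = 1} \<and> (card_of A, k) \<in> ordLess \<longrightarrow>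
        (\<exists>y \<in> Z. nrm y = 1 \<and>
           (\<forall>x \<in> A. nrm (lc r x s y) \<le> 1 \<and> nrm (lc r x (- s) y) \<le> 1)))"

text \<open>A Banach space X realised as a closed linear subspace of a Banach type, with
the inherited norm.\<close>

definition SQ :: "real \<Rightarrow> real \<Rightarrow> 'c rel \<Rightarrow> 'b::real_normed_vector set \<Rightarrow> bool" where
  "SQ r s k X = SQ_gen r s k X norm (\<lambda>a x b y. a *\<^sub>R x + b *\<^sub>R y)"

definition linf :: "'a set \<Rightarrow> ('a \<Rightarrow> 'b::real_normed_vector set) \<Rightarrow> ('a \<Rightarrow> 'b) set" where
  "linf I X = {x. (\<forall>\<alpha>\<in>I. x \<alpha> \<in> X \<alpha>) \<and> (\<forall>\<alpha>. \<alpha> \<notin> I \<longrightarrow> x \<alpha> = 0)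
                  \<and> bounded (x ` I)}"

definition linf_norm :: "'a set \<Rightarrow> ('a \<Rightarrow> 'b::real_normed_vector) \<Rightarrow> real" where
  "linf_norm I x = (SUP \<alpha>\<in>I. norm (x \<alpha>))"

definition SQ_linf :: "real \<Rightarrow> real \<Rightarrow> 'c rel \<Rightarrow> 'a set \<Rightarrow> ('a \<Rightarrow> 'b::real_normed_vector set) \<Rightarrow> bool" where
  "SQ_linf r s k I X = SQ_gen r s k (linf I X) (linf_norm I)
      (\<lambda>a x b y. (\<lambda>\<alpha>. a *\<^sub>R x \<alpha> + b *\<^sub>R y \<alpha>))"

definition SQ_lt1_1_linf :: "'c rel \<Rightarrow> 'a set \<Rightarrow> ('a \<Rightarrow> 'b::real_normed_vector set) \<Rightarrow> bool" where
  "SQ_lt1_1_linf k I X \<longleftrightarrow> (\<forall>t. 0 < t \<and> t < 1 \<longrightarrow> SQ_linf t 1 k I X)"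

end

theory Submission
  imports Defs
begin

lemma inj_seq:
  assumes inf: "\<And>n. infinite (B n)"
  shows "\<exists>f::nat \<Rightarrow> 'a. inj f \<and> (\<forall>n. f n \<in> B n)"
proof -
  define g :: "'a set \<Rightarrow> nat \<Rightarrow> 'a" where "g F n = (SOME a. a \<in> B n \<and> a \<notin> F)" for F n
  define F where "F = rec_nat {} (\<lambda>n S. insert (g S n) S)"
  define f where "f n = g (F n) n" for n
  have F0: "F 0 = {}" and FS: "F (Suc n) = insert (f n) (F n)" for n
    by (simp_all add: F_def f_def)
  have fin: "finite (F n)" for n by (induction n) (simp_all add: F0 FS)
  have gp: "g S n \<in> B n \<and> g S n \<notin> S" if "finite S" for S n
  proof -
    have "\<exists>a. a \<in> B n \<and> a \<notin> S"
      using inf[of n] that by (metis finite_subset subsetI)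
    then show ?thesis unfolding g_def by (rule someI_ex)
  qed
  have fB: "f n \<in> B n \<and> f n \<notin> F n" for n using gp[OF fin] by (simp add: f_def)
  have Fim: "F n = f ` {..<n}" for n
    by (induction n) (simp_all add: F0 FS lessThan_Suc)
  have ne: "f m \<noteq> f n" if "m < n" for m n
    using fB[of n] Fim[of n] that by (metis image_eqI lessThan_iff)
  have "inj f"
  proof (rule injI)
    fix m n assume "f m = f n"
    then show "m = n" using ne[of m n] ne[of n m] by (metis linorder_neq_iff)
  qed
  then show ?thesis using fB by blast
qed

lemma key_plus:
  fixes u Y :: "'b::real_normed_vector"
  assumes nY: "norm Y = 1" and h: "norm (r *\<^sub>R u + r *\<^sub>R Y) \<le> 1"
    and t: "0 < t" "t < r" "r < 1" and c: "0 \<le> c" "c \<le> 1"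
  shows "norm (t *\<^sub>R (c *\<^sub>R u) + (1 - t * (1 - r) / r) *\<^sub>R Y) \<le> 1"
proof -
  let ?s = "1 - t * (1 - r) / r"
  have r0: "r > 0" using t by linarith
  have eq: "t *\<^sub>R (c *\<^sub>R u) + ?s *\<^sub>R Y
      = (t * c / r) *\<^sub>R (r *\<^sub>R u + r *\<^sub>R Y) + (?s - t * c) *\<^sub>R Y"
    using r0 by (simp add: algebra_simps)
  have st: "?s - t * c \<ge> 0"
  proof -
    have "t * c \<le> t" using t c by (simp add: mult_left_le)
    moreover have "t + t * (1 - r) / r = t / r" using r0 by (simp add: field_simps)
    moreover have "t / r \<le> 1" using t r0 by simp
    ultimately show ?thesis by linarith
  qed
  have "norm (t *\<^sub>R (c *\<^sub>R u) + ?s *\<^sub>R Y)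
      \<le> norm ((t * c / r) *\<^sub>R (r *\<^sub>R u + r *\<^sub>R Y)) + norm ((?s - t * c) *\<^sub>R Y)"
    unfolding eq by (rule norm_triangle_ineq)
  also have "\<dots> = (t * c / r) * norm (r *\<^sub>R u + r *\<^sub>R Y) + (?s - t * c)"
    using st nY r0 t c by simp
  also have "\<dots> \<le> (t * c / r) + (?s - t * c)"
    using mult_left_le[OF h, of "t * c / r"] r0 t c by simp
  also have "\<dots> = ?s + t * c * (1 - r) / r" using r0 by (simp add: field_simps)
  also have "\<dots> \<le> ?s + t * (1 - r) / r"
  proof -
    have "t * c * (1 - r) \<le> t * (1 - r)" using t c by (simp add: mult_left_le)
    then show ?thesis using r0 by (simp add: divide_right_mono)
  qed
  also have "\<dots> = 1" by simp
  finally show ?thesis .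
qed

lemma key_minus:
  fixes u Y :: "'b::real_normed_vector"
  assumes nY: "norm Y = 1" and h: "norm (r *\<^sub>R u + (- r) *\<^sub>R Y) \<le> 1"
    and t: "0 < t" "t < r" "r < 1" and c: "0 \<le> c" "c \<le> 1"
  shows "norm (t *\<^sub>R (c *\<^sub>R u) + (- 1) *\<^sub>R ((1 - t * (1 - r) / r) *\<^sub>R Y)) \<le> 1"
proof -
  have "norm (r *\<^sub>R u + r *\<^sub>R (- Y)) \<le> 1" using h by simp
  from key_plus[OF _ this t c] nY
  have "norm (t *\<^sub>R (c *\<^sub>R u) + (1 - t * (1 - r) / r) *\<^sub>R (- Y)) \<le> 1" by simp
  moreover have "t *\<^sub>R (c *\<^sub>R u) + (1 - t * (1 - r) / r) *\<^sub>R (- Y)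
     = t *\<^sub>R (c *\<^sub>R u) + (- 1) *\<^sub>R ((1 - t * (1 - r) / r) *\<^sub>R Y)"
    by (simp only: scaleR_minus_right scaleR_minus1_left)
  ultimately show ?thesis by metis
qed

theorem theorem6p9:
  fixes I :: "'a set" and X :: "'a \<Rightarrow> 'b::banach set" and k :: "'c rel"
  assumes banach: "\<And>\<alpha>. \<alpha> \<in> I \<Longrightarrow> subspace (X \<alpha>) \<and> closed (X \<alpha>)"
    and kappa: "Card_order k" "\<not> finite (Field k)"
    and hyp: "\<And>r. 0 < r \<Longrightarrow> r < 1 \<Longrightarrow> infinite {\<alpha> \<in> I. SQ r r k (X \<alpha>)}"
  shows "SQ_lt1_1_linf k I X"
  unfolding SQ_lt1_1_linf_def
proof (intro allI impI)
  fix t :: real assume t: "0 < t \<and> t < 1"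
  define r where "r n = 1 - (1 - t) / (real n + 2)" for n :: nat
  have rt: "t < r n" and r1: "r n < 1" and r0: "0 < r n" for n
  proof -
    have "(1 - t) / (real n + 2) < 1 - t" using t by (simp add: divide_less_eq)
    moreover have "(1 - t) / (real n + 2) > 0" using t by simp
    ultimately show "t < r n" "r n < 1" "0 < r n" unfolding r_def using t by linarith+
  qed
  define B where "B n = {\<alpha> \<in> I. SQ (r n) (r n) k (X \<alpha>)}" for n
  obtain f where finj: "inj f" and fB: "\<forall>n. f n \<in> B n"
    using inj_seq[of B] hyp r0 r1 unfolding B_def by blast
  have fI: "f n \<in> I" and SQf: "SQ (r n) (r n) k (X (f n))" for n
    using fB unfolding B_def by auto
  have Ine: "I \<noteq> {}" using fI by blast
  show "SQ_linf t 1 k I X"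
    unfolding SQ_linf_def SQ_gen_def
  proof (intro allI impI)
    fix A assume A: "A \<subseteq> {z \<in> linf I X. linf_norm I z = 1} \<and> (card_of A, k) \<in> ordLess"
    have xbound: "norm (x \<alpha>) \<le> linf_norm I x" if "x \<in> linf I X" "\<alpha> \<in> I" for x \<alpha>
    proof -
      from that(1) have "bounded (x ` I)" unfolding linf_def by blast
      then obtain M where "\<forall>z\<in>x ` I. norm z \<le> M" unfolding bounded_iff by blast
      then have "bdd_above ((\<lambda>\<alpha>. norm (x \<alpha>)) ` I)" by (auto intro: bdd_aboveI2)
      then show ?thesis unfolding linf_norm_def using that(2) by (rule cSUP_upper2) simp
    qed
    have xA1: "norm (x \<alpha>) \<le> 1" and xX: "x \<alpha> \<in> X \<alpha>" if "x \<in> A" "\<alpha> \<in> I" for x \<alpha>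
      using xbound[of x \<alpha>] that A unfolding linf_def by auto
    define An where "An n = (\<lambda>x. (1 / norm (x (f n))) *\<^sub>R x (f n)) ` {x \<in> A. x (f n) \<noteq> 0}" for n
    have "\<exists>y\<in>X (f n). norm y = 1 \<and> (\<forall>v\<in>An n. norm (r n *\<^sub>R v + r n *\<^sub>R y) \<le> 1
              \<and> norm (r n *\<^sub>R v + (- r n) *\<^sub>R y) \<le> 1)" for n
    proof -
      have sub: "An n \<subseteq> {z \<in> X (f n). norm z = 1}"
      proof
        fix z assume "z \<in> An n"
        then obtain x where x: "x \<in> A" "x (f n) \<noteq> 0" and z: "z = (1 / norm (x (f n))) *\<^sub>R x (f n)"
          unfolding An_def by blast
        have "z \<in> X (f n)" unfolding z
          using banach[OF fI[of n]] xX[OF x(1) fI[of n]] by (simp add: subspace_scale)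
        moreover have "norm z = 1" unfolding z using x(2) by simp
        ultimately show "z \<in> {z \<in> X (f n). norm z = 1}" by blast
      qed
      have "(card_of (An n), card_of {x \<in> A. x (f n) \<noteq> 0}) \<in> ordLeq"
        unfolding An_def by (rule card_of_image)
      moreover have "(card_of {x \<in> A. x (f n) \<noteq> 0}, card_of A) \<in> ordLeq"
        by (rule card_of_mono1) blast
      ultimately have "(card_of (An n), k) \<in> ordLess"
        using A by (meson ordLeq_ordLess_trans ordLeq_transitive)
      then show ?thesis using SQf[of n] sub unfolding SQ_def SQ_gen_def by blast
    qed
    then have "\<forall>n. \<exists>y. y \<in> X (f n) \<and> norm y = 1 \<and> (\<forall>v\<in>An n. norm (r n *\<^sub>R v + r n *\<^sub>R y) \<le> 1
              \<and> norm (r n *\<^sub>R v + (- r n) *\<^sub>R y) \<le> 1)" by blast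
    then obtain Y where Y: "\<And>n. Y n \<in> X (f n)" "\<And>n. norm (Y n) = 1"
      "\<And>n v. v \<in> An n \<Longrightarrow> norm (r n *\<^sub>R v + r n *\<^sub>R Y n) \<le> 1"
      "\<And>n v. v \<in> An n \<Longrightarrow> norm (r n *\<^sub>R v + (- r n) *\<^sub>R Y n) \<le> 1"
      using choice[of "\<lambda>n y. y \<in> X (f n) \<and> norm y = 1 \<and> (\<forall>v\<in>An n. norm (r n *\<^sub>R v + r n *\<^sub>R y) \<le> 1
              \<and> norm (r n *\<^sub>R v + (- r n) *\<^sub>R y) \<le> 1)"] by metis
    define s where "s n = 1 - t * (1 - r n) / r n" for n
    have sr: "r n \<le> s n" and s1: "s n \<le> 1" for n
    proof -
      have "t * (1 - r n) \<le> r n * (1 - r n)" using rt[of n] r1[of n] by (simp add: mult_right_mono)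
      then have "t * (1 - r n) / r n \<le> 1 - r n" using r0[of n] by (simp add: divide_le_eq mult.commute)
      moreover have "t * (1 - r n) / r n \<ge> 0" using t r0[of n] r1[of n] by simp
      ultimately show "r n \<le> s n" "s n \<le> 1" unfolding s_def by linarith+
    qed
    define y where "y \<alpha> = (if \<alpha> \<in> range f then s (inv f \<alpha>) *\<^sub>R Y (inv f \<alpha>) else 0)" for \<alpha>
    have yf: "y (f n) = s n *\<^sub>R Y n" for n unfolding y_def using finj by simp
    have yout: "\<alpha> \<notin> range f \<Longrightarrow> y \<alpha> = 0" for \<alpha> unfolding y_def by simp
    have nyf: "norm (y (f n)) = s n" for n
      using yf Y(2) sr[of n] r0[of n] by simp
    have ynorm: "norm (y \<alpha>) \<le> 1" for \<alpha>
      using nyf s1 yout by (cases "\<alpha> \<in> range f") auto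
    have ylinf: "y \<in> linf I X"
      unfolding linf_def
    proof (intro CollectI conjI ballI allI impI)
      fix \<alpha> assume "\<alpha> \<in> I"
      show "y \<alpha> \<in> X \<alpha>"
      proof (cases "\<alpha> \<in> range f")
        case True
        then obtain n where n: "\<alpha> = f n" by blast
        show ?thesis unfolding n yf using banach[OF fI[of n]] Y(1)[of n] by (simp add: subspace_scale)
      next
        case False
        then show ?thesis using yout banach \<open>\<alpha> \<in> I\<close> by (simp add: subspace_0)
      qed
    next
      fix \<alpha> assume "\<alpha> \<notin> I"
      then have "\<alpha> \<notin> range f" using fI by blast
      then show "y \<alpha> = 0" by (rule yout)
    next
      show "bounded (y ` I)" unfolding bounded_iff using ynorm by blast
    qed
    have bdd: "bdd_above ((\<lambda>\<alpha>. norm (y \<alpha>)) ` I)" using ynorm by (intro bdd_aboveI2) auto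
    have yle: "linf_norm I y \<le> 1" unfolding linf_norm_def using Ine ynorm by (simp add: cSUP_least)
    have sle: "s n \<le> linf_norm I y" for n
      unfolding linf_norm_def using cSUP_upper[OF fI[of n] bdd] nyf[of n] by simp
    have yge: "1 \<le> linf_norm I y"
    proof (rule ccontr)
      assume "\<not> 1 \<le> linf_norm I y"
      then have L: "linf_norm I y < 1" by simp
      obtain n where n: "1 / (1 - linf_norm I y) < real n" using reals_Archimedean2 by blast
      have pos: "0 < 1 - linf_norm I y" using L by simp
      then have "1 < real n * (1 - linf_norm I y)" using n by (simp add: divide_less_eq mult.commute)
      then have "1 / real n < 1 - linf_norm I y" using pos n
        by (smt (verit) divide_less_eq divide_pos_pos mult.commute)
      moreover have "(1 - t) / (real n + 2) \<le> 1 / real n"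
      proof -
        have "0 < 1 / (1 - linf_norm I y)" using pos by simp
        then have np: "0 < real n" using n by linarith
        show ?thesis by (rule frac_le) (use t np in auto)
      qed
      ultimately have "linf_norm I y < r n" unfolding r_def by linarith
      then show False using sle[of n] sr[of n] by linarith
    qed
    have ynorm1: "linf_norm I y = 1" using yle yge by simp
    have main: "norm (t *\<^sub>R x \<alpha> + \<sigma> *\<^sub>R y \<alpha>) \<le> 1"
      if x: "x \<in> A" and a: "\<alpha> \<in> I" and sg: "\<sigma> = 1 \<or> \<sigma> = -1" for x \<alpha> \<sigma>
    proof (cases "\<alpha> \<in> range f")
      case False
      then have "norm (t *\<^sub>R x \<alpha> + \<sigma> *\<^sub>R y \<alpha>) = t * norm (x \<alpha>)" using yout t by simp
      also have "\<dots> \<le> 1" using xA1[OF x a] t by (simp add: mult_le_one)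
      finally show ?thesis .
    next
      case True
      then obtain n where n: "\<alpha> = f n" by blast
      show ?thesis
      proof (cases "x \<alpha> = 0")
        case True
        then show ?thesis using sg nyf[of n] s1[of n] n by auto
      next
        case False
        define c where "c = norm (x \<alpha>)"
        define u where "u = (1 / c) *\<^sub>R x \<alpha>"
        have c0: "0 \<le> c" "c \<le> 1" using xA1[OF x a] unfolding c_def by auto
        have xu: "x \<alpha> = c *\<^sub>R u" unfolding u_def c_def using False by simp
        have uA: "u \<in> An n" unfolding An_def u_def c_def n using x False n by blast
        have xu': "x (f n) = c *\<^sub>R u" using xu n by simp
        have tr: "0 < t" "t < r n" "r n < 1" using t rt r1 by auto
        from sg show ?thesis
        proof
          assume "\<sigma> = 1"
          then show ?thesis using key_plus[OF Y(2)[of n] Y(3)[OF uA] tr c0]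
            unfolding n xu' yf s_def by simp
        next
          assume "\<sigma> = -1"
          then show ?thesis using key_minus[OF Y(2)[of n] Y(4)[OF uA] tr c0]
            unfolding n xu' yf s_def by simp
        qed
      qed
    qed
    have "linf_norm I (\<lambda>\<alpha>. t *\<^sub>R x \<alpha> + \<sigma> *\<^sub>R y \<alpha>) \<le> 1"
      if "x \<in> A" "\<sigma> = 1 \<or> \<sigma> = -1" for x \<sigma>
      unfolding linf_norm_def using Ine main[OF that(1) _ that(2)] by (simp add: cSUP_least)
    then show "\<exists>y\<in>linf I X. linf_norm I y = 1 \<and>
           (\<forall>x\<in>A. linf_norm I (\<lambda>\<alpha>. t *\<^sub>R x \<alpha> + 1 *\<^sub>R y \<alpha>) \<le> 1 \<and>
                   linf_norm I (\<lambda>\<alpha>. t *\<^sub>R x \<alpha> + (- 1) *\<^sub>R y \<alpha>) \<le> 1)"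
      using ylinf ynorm1 by blast
  qed
qed

end
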